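(* Consider the two-camp, two-phase zero-sum game with bias-dependent camp weights described in the context. For either camp and any fixed strategy of the other camp, it is optimal to exhaust the entire budget, and if not, it is optimal to not invest at all. Furthermore, it is an optimal strategy to invest on at most one node in a given phase (i.e., there is a best response in which each of the camp's two phase-investment vectors has at most one nonzero entry).
   Context: A social network has node set $N=\{1,\dots,n\}$ and a real $n\times n$ matrix $\mathbf{w}=(w_{ij})$ with $\sum_j|w_{ij}|<1$ for every $i$; write $\Delta=(\mathbf{I}-\mathbf{w})^{-1}$. Each node $i$ has an initial opinion $v_i^0$, a bias weight $w_{ii}^0$, and a total camp weight $\theta_i$. The good camp chooses $\mathbf{x^{(1)}},\mathbf{x^{(2)}}\ge 0$ with $\sum_i(x_i^{(1)}+x_i^{(2)})\le k_g$; the bad camp chooses $\mathbf{y^{(1)}},\mathbf{y^{(2)}}\ge 0$ with $\sum_i(y_i^{(1)}+y_i^{(2)})\le k_b$ ($k_g,k_b\ge0$). Opinions evolve by $\mathbf{v^{(0)}}=\mathbf{v^0}$ and for $p=1,2$: $\mathbf{v^{(p)}}=\Delta(\mathbf{w^0}\circ\mathbf{v^{(p-1)}}+\mathbf{w_g^{(p)}}\circ\mathbf{x^{(p)}}-\mathbf{w_b^{(p)}}\circ\mathbf{y^{(p)}})$, where $\circ$ is the entrywise product, $\mathbf{w^0}=(w_{ii}^0)_i$, $w_{ig}^{(p)}=\theta_i\frac{1+w_{ii}^0v_i^{(p-1)}}{2}$ and $w_{ib}^{(p)}=\theta_i\frac{1-w_{ii}^0v_i^{(p-1)}}{2}$.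 The good camp's utility is $\sum_i v_i^{(2)}$ and the bad camp's utility is $-\sum_i v_i^{(2)}$. *)

theory Defs
  imports "HOL-Analysis.Analysis"
begin

text \<open>Nodes are the elements of a finite type 'n; vectors are real^'n,
  matrices real^'n^'n (rows indexed first).\<close>

definition Delta :: "real^'n^'n \<Rightarrow> real^'n^'n" where
  "Delta w = matrix_inv (mat 1 - w)"

definition wg :: "real^'n \<Rightarrow> real^'n \<Rightarrow> real^'n \<Rightarrow> real^'n" where
  "wg \<theta> w0 vprev = (\<chi> i. \<theta>$i * (1 + w0$i * vprev$i) / 2)"

definition wb :: "real^'n \<Rightarrow> real^'n \<Rightarrow> real^'n \<Rightarrow> real^'n" where
  "wb \<theta> w0 vprev = (\<chi> i. \<theta>$i * (1 - w0$i * vprev$i) / 2)"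

definition phase_step ::
  "real^'n^'n \<Rightarrow> real^'n \<Rightarrow> real^'n \<Rightarrow> real^'n \<Rightarrow> real^'n \<Rightarrow> real^'n \<Rightarrow> real^'n" where
  "phase_step w w0 \<theta> vprev x y =
     Delta w *v (\<chi> i. w0$i * vprev$i + (wg \<theta> w0 vprev)$i * x$i - (wb \<theta> w0 vprev)$i * y$i)"

definition good_utility ::
  "real^'n^'n \<Rightarrow> real^'n \<Rightarrow> real^'n \<Rightarrow> real^'n \<Rightarrow>
   real^'n \<Rightarrow> real^'n \<Rightarrow> real^'n \<Rightarrow> real^'n \<Rightarrow> real" where
  "good_utility w w0 \<theta> v0 x1 x2 y1 y2 =
     (\<Sum>i\<in>UNIV. (phase_step w w0 \<theta> (phase_step w w0 \<theta> v0 x1 y1) x2 y2) $ i)"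

definition feasible :: "real \<Rightarrow> real^'n \<Rightarrow> real^'n \<Rightarrow> bool" where
  "feasible k a1 a2 \<longleftrightarrow> (\<forall>i. 0 \<le> a1$i \<and> 0 \<le> a2$i) \<and>
     (\<Sum>i\<in>UNIV. a1$i) + (\<Sum>i\<in>UNIV. a2$i) \<le> k"

definition total_investment :: "real^'n \<Rightarrow> real^'n \<Rightarrow> real" where
  "total_investment a1 a2 = (\<Sum>i\<in>UNIV. a1$i) + (\<Sum>i\<in>UNIV. a2$i)"

definition at_most_one_nonzero :: "real^'n \<Rightarrow> bool" where
  "at_most_one_nonzero a \<longleftrightarrow> card {i. a$i \<noteq> 0} \<le> 1"

definition good_best_response where
  "good_best_response w w0 \<theta> v0 kg y1 y2 x1 x2 \<longleftrightarrow> feasible kg x1 x2 \<and>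
     (\<forall>x1' x2'. feasible kg x1' x2' \<longrightarrow>
        good_utility w w0 \<theta> v0 x1' x2' y1 y2 \<le> good_utility w w0 \<theta> v0 x1 x2 y1 y2)"

definition bad_best_response where
  "bad_best_response w w0 \<theta> v0 kb x1 x2 y1 y2 \<longleftrightarrow> feasible kb y1 y2 \<and>
     (\<forall>y1' y2'. feasible kb y1' y2' \<longrightarrow>
        - good_utility w w0 \<theta> v0 x1 x2 y1' y2' \<le> - good_utility w w0 \<theta> v0 x1 x2 y1 y2)"

end

theory Submission imports Defs begin

definition aff :: "(real^'n \<Rightarrow> real) \<Rightarrow> bool" where
  "aff f \<longleftrightarrow> (\<exists>a c. \<forall>x. f x = a + (\<Sum>i\<in>UNIV. c$i * x$i))"

lemma aff_const: "aff (\<lambda>x. a)"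
  unfolding aff_def by (rule exI[of _ a], rule exI[of _ 0]) simp

lemma aff_comp: fixes j :: "'n::finite" shows "aff (\<lambda>x::real^'n. x$j)"
proof -
  have "x$j = 0 + (\<Sum>i\<in>UNIV. (\<chi> i. if i = j then 1 else 0)$i * x$i)" for x :: "real^'n"
  proof -
    have "(\<Sum>i\<in>UNIV. (\<chi> i. if i = j then 1 else 0)$i * x$i) = (\<Sum>i\<in>UNIV. if i = j then x$i else 0)"
      by (rule sum.cong) auto
    then show ?thesis by simp
  qed
  then show ?thesis unfolding aff_def by blast
qed

lemma aff_add: "aff f \<Longrightarrow> aff g \<Longrightarrow> aff (\<lambda>x. f x + g x)"
proof -
  assume "aff f" "aff g"
  then obtain a c b d where "\<And>x. f x = a + (\<Sum>i\<in>UNIV. c$i * x$i)" "\<And>x. g x = b + (\<Sum>i\<in>UNIV. d$i * x$i)"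
    unfolding aff_def by metis
  then show ?thesis unfolding aff_def
    by (intro exI[of _ "a+b"] exI[of _ "c+d"]) (simp add: distrib_right sum.distrib)
qed

lemma aff_cmult: "aff f \<Longrightarrow> aff (\<lambda>x. r * f x)"
  unfolding aff_def
  apply (elim exE)
  subgoal for a c
    by (rule exI[of _ "r*a"], rule exI[of _ "r *s c"]) (simp add: distrib_left sum_distrib_left mult.assoc)
  done

lemma aff_multc: "aff f \<Longrightarrow> aff (\<lambda>x. f x * r)"
  using aff_cmult[of f r] by (simp add: mult.commute)

lemma aff_divc: "aff f \<Longrightarrow> aff (\<lambda>x. f x / r)"
  using aff_multc[of f "1/r"] by simp

lemma aff_neg: "aff f \<Longrightarrow> aff (\<lambda>x. - f x)"
  using aff_cmult[of f "-1"] by simp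

lemma aff_diff: "aff f \<Longrightarrow> aff g \<Longrightarrow> aff (\<lambda>x. f x - g x)"
  using aff_add[of f "\<lambda>x. - g x"] aff_neg[of g] by simp

lemma aff_sum: "finite A \<Longrightarrow> (\<And>k. k \<in> A \<Longrightarrow> aff (F k)) \<Longrightarrow> aff (\<lambda>x. \<Sum>k\<in>A. F k x)"
  by (induction A rule: finite_induct) (auto intro: aff_const aff_add)

lemma aff_phaseA:
  assumes "\<And>k. aff (\<lambda>z. V z $ k)"
  shows "aff (\<lambda>z. phase_step w w0 \<theta> (V z) x y $ j)"
  unfolding phase_step_def wg_def wb_def matrix_vector_mult_def
  by (simp, intro aff_sum finite aff_cmult aff_multc aff_divc aff_add aff_diff aff_const assms)

lemma aff_phaseB:
  assumes "\<And>k. aff (\<lambda>z. X z $ k)"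
  shows "aff (\<lambda>z. phase_step w w0 \<theta> v (X z) y $ j)"
  unfolding phase_step_def wg_def wb_def matrix_vector_mult_def
  by (simp, intro aff_sum finite aff_cmult aff_multc aff_divc aff_add aff_diff aff_const assms)

lemma aff_phaseC:
  assumes "\<And>k. aff (\<lambda>z. Y z $ k)"
  shows "aff (\<lambda>z. phase_step w w0 \<theta> v x (Y z) $ j)"
  unfolding phase_step_def wg_def wb_def matrix_vector_mult_def
  by (simp, intro aff_sum finite aff_cmult aff_multc aff_divc aff_add aff_diff aff_const assms)

lemma aff_U1: "aff (\<lambda>z. good_utility w w0 \<theta> v0 z x2 y1 y2)"
  unfolding good_utility_def
  by (intro aff_sum finite aff_phaseA aff_phaseB aff_comp)
lemma aff_U2: "aff (\<lambda>z. good_utility w w0 \<theta> v0 x1 z y1 y2)"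
  unfolding good_utility_def
  by (intro aff_sum finite aff_phaseB aff_comp)
lemma aff_U3: "aff (\<lambda>z. good_utility w w0 \<theta> v0 x1 x2 z y2)"
  unfolding good_utility_def
  by (intro aff_sum finite aff_phaseA aff_phaseC aff_comp)
lemma aff_U4: "aff (\<lambda>z. good_utility w w0 \<theta> v0 x1 x2 y1 z)"
  unfolding good_utility_def
  by (intro aff_sum finite aff_phaseC aff_comp)

lemma aff_rep:
  assumes "aff f" shows "f x = f 0 + (\<Sum>i\<in>UNIV. x$i * (f (axis i 1) - f 0))"
proof -
  obtain a c where h: "\<And>x. f x = a + (\<Sum>i\<in>UNIV. c$i * x$i)" using assms unfolding aff_def by blast
  have "f (axis i 1) - f 0 = c$i" for i
    by (simp add: h axis_def if_distrib cong: if_cong)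
  then show ?thesis by (simp add: h mult.commute)
qed

lemma aff_cont:
  assumes "aff g" "continuous_on A h" shows "continuous_on A (\<lambda>p. g (h p))"
proof -
  obtain a c where h: "\<And>x. g x = a + (\<Sum>i\<in>UNIV. c$i * x$i)" using assms unfolding aff_def by blast
  show ?thesis unfolding h by (intro continuous_intros assms(2))
qed

lemma extreme:
  assumes "aff f" "\<forall>i. 0 \<le> x$i" "(\<Sum>i\<in>UNIV. x$i) \<le> t"
  shows "\<exists>z. f x \<le> f z \<and> (\<forall>i. 0 \<le> z$i) \<and> ((\<Sum>i\<in>UNIV. z$i) = 0 \<or> (\<Sum>i\<in>UNIV. z$i) = t)
     \<and> at_most_one_nonzero z"
proof -
  obtain a c where h: "\<And>x. f x = a + (\<Sum>i\<in>UNIV. c$i * x$i)" using assms unfolding aff_def by blast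
  have t0: "0 \<le> t" using assms(2,3) sum_nonneg[of UNIV "\<lambda>i. x$i"] by auto
  have "Max (range (\<lambda>j. c$j)) \<in> range (\<lambda>j. c$j)" by (rule Max_in) auto
  then obtain i where i: "c$i = Max (range (\<lambda>j. c$j))" by (metis imageE)
  have ci: "c$j \<le> c$i" for j using i by simp
  show ?thesis
  proof (cases "c$i \<le> 0")
    case True
    have "(\<Sum>j\<in>UNIV. c$j * x$j) \<le> 0"
      by (rule sum_nonpos) (meson True ci assms(2) mult_nonpos_nonneg order_trans)
    then show ?thesis
      by (intro exI[of _ 0]) (simp add: h at_most_one_nonzero_def)
  next
    case False
    have "(\<Sum>j\<in>UNIV. c$j * x$j) \<le> (\<Sum>j\<in>UNIV. c$i * x$j)"
      by (rule sum_mono) (simp add: ci assms(2) mult_right_mono)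
    also have "\<dots> = c$i * (\<Sum>j\<in>UNIV. x$j)" by (simp add: sum_distrib_left)
    also have "\<dots> \<le> c$i * t" using False assms(3) by simp
    finally have le: "f x \<le> a + c$i * t" by (simp add: h)
    have fz: "f (axis i t) = a + c$i * t"
      by (simp add: h axis_def if_distrib cong: if_cong)
    have sz: "(\<Sum>j\<in>UNIV. axis i t $ j) = t"
      by (simp add: axis_def)
    have "{j. axis i t $ j \<noteq> 0} \<subseteq> {i}" by (auto simp: axis_def)
    then have "card {j. axis i t $ j \<noteq> 0} \<le> 1"
      using card_mono[of "{i}"] by fastforce
    then show ?thesis using le fz sz t0
      by (intro exI[of _ "axis i t"]) (auto simp: at_most_one_nonzero_def axis_def)
  qed
qed

lemma feas_bounded: "bounded {a::real^'n. (\<forall>i. 0 \<le> a$i) \<and> (\<Sum>i\<in>UNIV. a$i) \<le> k}"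
  unfolding bounded_iff
proof (intro exI ballI)
  fix a :: "real^'n" assume "a \<in> {a. (\<forall>i. 0 \<le> a$i) \<and> (\<Sum>i\<in>UNIV. a$i) \<le> k}"
  then have "(\<forall>i. 0 \<le> a$i)" "(\<Sum>i\<in>UNIV. a$i) \<le> k" by auto
  then have "(\<Sum>i\<in>UNIV. \<bar>a$i\<bar>) \<le> k" by simp
  then show "norm a \<le> k" using norm_le_l1_cart[of a] by linarith
qed

lemma abstract:
  fixes F :: "real^'n \<Rightarrow> real^'n \<Rightarrow> real"
  assumes A1: "\<And>b. aff (\<lambda>a. F a b)" and A2: "\<And>a. aff (\<lambda>b. F a b)" and k: "0 \<le> k"
  shows "\<exists>x1 x2. (feasible k x1 x2 \<and> (\<forall>x1' x2'. feasible k x1' x2' \<longrightarrow> F x1' x2' \<le> F x1 x2)) \<and>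
     (total_investment x1 x2 = k \<or> total_investment x1 x2 = 0) \<and>
     at_most_one_nonzero x1 \<and> at_most_one_nonzero x2"
proof -
  define S where "S = {p::(real^'n) \<times> (real^'n). feasible k (fst p) (snd p)}"
  define B where "B = {a::real^'n. (\<forall>i. 0 \<le> a$i) \<and> (\<Sum>i\<in>UNIV. a$i) \<le> k}"
  have "closed S" unfolding S_def feasible_def
    by (intro closed_Collect_conj closed_Collect_all closed_Collect_le continuous_intros)
  moreover have "S \<subseteq> B \<times> B"
  proof
    fix p assume "p \<in> S"
    then have "(\<forall>i. 0 \<le> fst p$i \<and> 0 \<le> snd p$i)" "(\<Sum>i\<in>UNIV. fst p$i) + (\<Sum>i\<in>UNIV. snd p$i) \<le> k"
      unfolding S_def feasible_def by auto
    moreover have "0 \<le> (\<Sum>i\<in>UNIV. fst p$i)" "0 \<le> (\<Sum>i\<in>UNIV. snd p$i)"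
      using calculation(1) by (auto intro: sum_nonneg)
    ultimately show "p \<in> B \<times> B" unfolding B_def by (cases p) auto
  qed
  moreover have "bounded (B \<times> B)" unfolding B_def by (intro bounded_Times feas_bounded)
  ultimately have "compact S"
    using bounded_subset compact_eq_bounded_closed by blast
  moreover have "S \<noteq> {}"
  proof -
    have "(0,0) \<in> S" unfolding S_def feasible_def by (simp add: k)
    then show ?thesis by blast
  qed
  moreover have "continuous_on S (\<lambda>p. F (fst p) (snd p))"
  proof -
    have eq: "F (fst p) (snd p) = F 0 (snd p) + (\<Sum>i\<in>UNIV. fst p $ i * (F (axis i 1) (snd p) - F 0 (snd p)))" for p
      using aff_rep[OF A1] by blast
    show ?thesis unfolding eq
      by (intro continuous_intros aff_cont[OF A2])
  qed
  ultimately obtain p where "p \<in> S" and pmax: "\<forall>q\<in>S. F (fst q) (snd q) \<le> F (fst p) (snd p)"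
    using continuous_attains_sup by blast
  define x1 x2 where "x1 = fst p" "x2 = snd p"
  have f0: "feasible k x1 x2" using \<open>p \<in> S\<close> unfolding S_def x1_x2_def by simp
  have opt0: "\<forall>a b. feasible k a b \<longrightarrow> F a b \<le> F x1 x2"
    using pmax unfolding S_def x1_x2_def by auto
  let ?s = "\<lambda>a::real^'n. \<Sum>i\<in>UNIV. a$i"
  have nn: "0 \<le> ?s a" if "\<forall>i. 0 \<le> a$i" for a using that by (auto intro: sum_nonneg)
  from f0 have x1n: "\<forall>i. 0 \<le> x1$i" and x2n: "\<forall>i. 0 \<le> x2$i" and sx: "?s x1 + ?s x2 \<le> k"
    unfolding feasible_def by auto
  obtain z1 where z1: "F x1 x2 \<le> F z1 x2" "\<forall>i. 0 \<le> z1$i" "?s z1 = 0 \<or> ?s z1 = k - ?s x2"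
      "at_most_one_nonzero z1"
    using extreme[OF A1[of x2] x1n, of "k - ?s x2"] sx by auto
  have fz1: "feasible k z1 x2" using z1 x2n sx nn[OF x1n] nn[OF x2n] unfolding feasible_def by auto
  have opt1: "\<forall>a b. feasible k a b \<longrightarrow> F a b \<le> F z1 x2" using opt0 z1(1) by fastforce
  obtain z2 where z2: "F z1 x2 \<le> F z1 z2" "\<forall>i. 0 \<le> z2$i" "?s z2 = 0 \<or> ?s z2 = k - ?s z1"
      "at_most_one_nonzero z2"
    using extreme[OF A2[of z1] x2n, of "k - ?s z1"] fz1 unfolding feasible_def by auto
  have fz2: "feasible k z1 z2" using z1 z2 x2n sx nn[OF x1n] nn[OF x2n] k unfolding feasible_def by auto
  have opt2: "\<forall>a b. feasible k a b \<longrightarrow> F a b \<le> F z1 z2" using opt1 z2(1) by fastforce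
  show ?thesis
  proof (cases "?s z2 = k - ?s z1")
    case True
    then have "total_investment z1 z2 = k" by (simp add: total_investment_def)
    then show ?thesis using fz2 opt2 z1(4) z2(4) by blast
  next
    case False
    then have s2: "?s z2 = 0" using z2 by auto
    obtain z3 where z3: "F z1 z2 \<le> F z3 z2" "\<forall>i. 0 \<le> z3$i" "?s z3 = 0 \<or> ?s z3 = k - ?s z2"
      "at_most_one_nonzero z3"
      using extreme[OF A1[of z2] z1(2), of "k - ?s z2"] fz2 unfolding feasible_def by auto
    have fz3: "feasible k z3 z2" using z3 z2 s2 k unfolding feasible_def by auto
    have opt3: "\<forall>a b. feasible k a b \<longrightarrow> F a b \<le> F z3 z2" using opt2 z3(1) by fastforce
    have "total_investment z3 z2 = k \<or> total_investment z3 z2 = 0"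
      using z3(3) s2 by (auto simp add: total_investment_def)
    then show ?thesis using fz3 opt3 z3(4) z2(4) by blast
  qed
qed

theorem lemma2:
  fixes w :: "real^'n^'n" and w0 \<theta> v0 :: "real^'n" and kg kb :: real
  assumes rows: "\<forall>i. (\<Sum>j\<in>UNIV. \<bar>w$i$j\<bar>) < 1"
    and kg: "0 \<le> kg" and kb: "0 \<le> kb"
  shows "(\<forall>y1 y2. feasible kb y1 y2 \<longrightarrow>
           (\<exists>x1 x2. good_best_response w w0 \<theta> v0 kg y1 y2 x1 x2 \<and>
              (total_investment x1 x2 = kg \<or> total_investment x1 x2 = 0) \<and>
              at_most_one_nonzero x1 \<and> at_most_one_nonzero x2))
       \<and> (\<forall>x1 x2. feasible kg x1 x2 \<longrightarrow>
           (\<exists>y1 y2. bad_best_response w w0 \<theta> v0 kb x1 x2 y1 y2 \<and>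
              (total_investment y1 y2 = kb \<or> total_investment y1 y2 = 0) \<and>
              at_most_one_nonzero y1 \<and> at_most_one_nonzero y2))"
proof (intro conjI allI impI)
  fix y1 y2 :: "real^'n"
  show "\<exists>x1 x2. good_best_response w w0 \<theta> v0 kg y1 y2 x1 x2 \<and>
              (total_investment x1 x2 = kg \<or> total_investment x1 x2 = 0) \<and>
              at_most_one_nonzero x1 \<and> at_most_one_nonzero x2"
    using abstract[of "\<lambda>a b. good_utility w w0 \<theta> v0 a b y1 y2", OF aff_U1 aff_U2 kg]
    unfolding good_best_response_def by blast
next
  fix x1 x2 :: "real^'n"
  show "\<exists>y1 y2. bad_best_response w w0 \<theta> v0 kb x1 x2 y1 y2 \<and>
              (total_investment y1 y2 = kb \<or> total_investment y1 y2 = 0) \<and>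
              at_most_one_nonzero y1 \<and> at_most_one_nonzero y2"
    using abstract[of "\<lambda>a b. - good_utility w w0 \<theta> v0 x1 x2 a b", OF aff_neg[OF aff_U3] aff_neg[OF aff_U4] kb]
    unfolding bad_best_response_def by blast
qed

end
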